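(* Let $\Sigma=(\mathbb{N}_0,X,U,\mathscr{U},\phi)$ be a control system as in the standing setup and let $Q\subset X$ be a nonempty compact set. Then $Q$ is finitely equi-invariant if and only if $Q$ has bounded invariance complexity.
   Context: Standing setup: $(X,d)$ is a metric space, $U$ is a compact metric space, and $F:X\times U\to X$ is a map such that $F_u:=F(\cdot,u)$ is continuous for every $u\in U$. Let $\mathscr U=U^{\mathbb N_0}$ with the product topology. For $\omega=(\omega_0,\omega_1,\dots)\in\mathscr U$, $x\in X$, set $\phi(0,x,\omega)=x$ and $\phi(k,x,\omega)=F_{\omega_{k-1}}\circ\cdots\circ F_{\omega_0}(x)$ for $k\ge1$. It is assumed that $\phi:\mathbb N_0\times X\times\mathscr U\to X$ is continuous. Notation: $\mathbb N=\{1,2,\dots\}$, $\mathbb N_0=\{0,1,2,\dots\}$; $B(x,\delta)$ is the open ball; $d(y,Q)=\inf_{q\in Q}d(y,q)$; $B_\varepsilon(Q)=\{y\in X:d(y,Q)<\varepsilon\}$; for $A\subset\mathbb N_0$, $\phi(A,x,\omega)=\{\phi(k,x,\omega):k\in A\}$. Finite equi-invariance: a point $x\in Q$ is a finitely equi-invariant point of $Q$ if for every $\varepsilon>0$ there exist $\delta>0$ and a finite set $F\subset\mathscr U$ such that for every $y\in B(x,\delta)\cap Q$ there is $\omega\in F$ with $\phi(\mathbb N_0,y,\omega)\subset B_\varepsilon(Q)$. $Q$ is finitely equi-invariant if every point of $Q$ is a finitely equi-invariant point of $Q$. Invariance complexity: for $\omega\in\mathscr U$, $n\in\mathbb N$,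 $\varepsilon>0$ let $Q^\varepsilon_{n,\omega}=\{x\in Q:\phi(\{0,1,\dots,n-1\},x,\omega)\subset B_\varepsilon(Q)\}$. A set $F\subset\mathscr U$ is $(n,\varepsilon,Q)$-spanning if $Q=\bigcup_{\omega\in F}Q^\varepsilon_{n,\omega}$, and $r_{inv}(n,\varepsilon,Q)$ is the minimal cardinality of an $(n,\varepsilon,Q)$-spanning set ($=\infty$ if none exists). $Q$ has bounded invariance complexity if for every $\varepsilon>0$ there is $C>0$ with $r_{inv}(n,\varepsilon,Q)\le C$ for all $n\in\mathbb N$. *)

theory Defs
  imports "HOL-Analysis.Analysis" "HOL-Library.Extended_Nat"
begin

definition ctrl_seqs :: "'u set \<Rightarrow> (nat \<Rightarrow> 'u) set" where
  "ctrl_seqs U = {\<omega>. \<forall>n. \<omega> n \<in> U}"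

fun phi :: "('u \<Rightarrow> 'a \<Rightarrow> 'a) \<Rightarrow> nat \<Rightarrow> 'a \<Rightarrow> (nat \<Rightarrow> 'u) \<Rightarrow> 'a" where
  "phi F 0 x \<omega> = x"
| "phi F (Suc k) x \<omega> = F (\<omega> k) (phi F k x \<omega>)"

definition nbhd :: "real \<Rightarrow> 'a::metric_space set \<Rightarrow> 'a set" where
  "nbhd \<epsilon> Q = {y. infdist y Q < \<epsilon>}"

definition fin_equi_inv_point ::
  "('u \<Rightarrow> 'a \<Rightarrow> 'a) \<Rightarrow> 'u set \<Rightarrow> 'a::metric_space set \<Rightarrow> 'a \<Rightarrow> bool" where
  "fin_equi_inv_point F U Q x \<longleftrightarrow> x \<in> Q \<and>
     (\<forall>\<epsilon>>0. \<exists>\<delta>>0. \<exists>S. finite S \<and> S \<subseteq> ctrl_seqs U \<and>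
        (\<forall>y \<in> ball x \<delta> \<inter> Q. \<exists>\<omega>\<in>S. (\<lambda>k. phi F k y \<omega>) ` UNIV \<subseteq> nbhd \<epsilon> Q))"

definition fin_equi_inv ::
  "('u \<Rightarrow> 'a \<Rightarrow> 'a) \<Rightarrow> 'u set \<Rightarrow> 'a::metric_space set \<Rightarrow> bool" where
  "fin_equi_inv F U Q \<longleftrightarrow> (\<forall>x\<in>Q. fin_equi_inv_point F U Q x)"

definition Qset ::
  "('u \<Rightarrow> 'a \<Rightarrow> 'a) \<Rightarrow> 'a::metric_space set \<Rightarrow> nat \<Rightarrow> real \<Rightarrow> (nat \<Rightarrow> 'u) \<Rightarrow> 'a set" where
  "Qset F Q n \<epsilon> \<omega> = {x \<in> Q. (\<lambda>k. phi F k x \<omega>) ` {0..<n} \<subseteq> nbhd \<epsilon> Q}"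

definition spanning ::
  "('u \<Rightarrow> 'a \<Rightarrow> 'a) \<Rightarrow> 'u set \<Rightarrow> nat \<Rightarrow> real \<Rightarrow> 'a::metric_space set \<Rightarrow> (nat \<Rightarrow> 'u) set \<Rightarrow> bool" where
  "spanning F U n \<epsilon> Q S \<longleftrightarrow> S \<subseteq> ctrl_seqs U \<and> Q = (\<Union>\<omega>\<in>S. Qset F Q n \<epsilon> \<omega>)"

text \<open>Minimal cardinality of an (n,eps,Q)-spanning set; infinity if no finite one exists.\<close>
definition r_inv ::
  "('u \<Rightarrow> 'a \<Rightarrow> 'a) \<Rightarrow> 'u set \<Rightarrow> nat \<Rightarrow> real \<Rightarrow> 'a::metric_space set \<Rightarrow> enat" where
  "r_inv F U n \<epsilon> Q = (INF S \<in> {S. finite S \<and> spanning F U n \<epsilon> Q S}. enat (card S))"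

definition bounded_inv_complexity ::
  "('u \<Rightarrow> 'a \<Rightarrow> 'a) \<Rightarrow> 'u set \<Rightarrow> 'a::metric_space set \<Rightarrow> bool" where
  "bounded_inv_complexity F U Q \<longleftrightarrow>
     (\<forall>\<epsilon>>0. \<exists>C::real. C > 0 \<and> (\<forall>n\<ge>1. r_inv F U n \<epsilon> Q \<noteq> \<infinity> \<and> real (the_enat (r_inv F U n \<epsilon> Q)) \<le> C))"

end

theory Submission
  imports Defs
begin

lemma pigeon_aux:
  fixes P :: "nat \<Rightarrow> nat \<Rightarrow> bool"
  assumes "\<forall>n. \<exists>i<(N::nat). \<forall>k<n. P i k"
  shows "\<exists>i<N. \<forall>k. P i k"
proof (rule ccontr)
  assume "\<not> ?thesis"
  then have "\<forall>i. \<exists>k. i < N \<longrightarrow> \<not> P i k" by blast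
  then obtain kk where kk: "\<And>i. i < N \<Longrightarrow> \<not> P i (kk i)" by metis
  define n where "n = Suc (Max (kk ` {..<N}))"
  from assms obtain i where i: "i < N" "\<forall>k<n. P i k" by blast
  have "kk i \<le> Max (kk ` {..<N})" using i(1) by (intro Max_ge) auto
  then have "kk i < n" unfolding n_def by simp
  with i kk show False by blast
qed

lemma compact_ctrl: assumes "compact (U::'u::topological_space set)"
  shows "compact (ctrl_seqs U)"
proof -
  have "compactin (product_topology (\<lambda>_. euclidean) UNIV) (PiE UNIV (\<lambda>_::nat. U))"
    using assms by (subst compactin_PiE) auto
  moreover have "PiE UNIV (\<lambda>_::nat. U) = ctrl_seqs U"
    by (auto simp: ctrl_seqs_def PiE_def extensional_def Pi_def)
  ultimately show ?thesis by (simp add: euclidean_product_topology)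
qed

theorem mainTheorem1:
  fixes F :: "'u::metric_space \<Rightarrow> 'a::metric_space \<Rightarrow> 'a"
    and U :: "'u set" and Q :: "'a set"
  assumes U_compact: "compact U"
    and F_cont: "\<And>u. u \<in> U \<Longrightarrow> continuous_on UNIV (F u)"
    and phi_cont: "\<And>k. continuous_on (UNIV \<times> ctrl_seqs U) (\<lambda>(x, \<omega>). phi F k x \<omega>)"
    and Q_ne: "Q \<noteq> {}" and Q_compact: "compact Q"
  shows "fin_equi_inv F U Q \<longleftrightarrow> bounded_inv_complexity F U Q"
proof
  assume H: "fin_equi_inv F U Q"
  show "bounded_inv_complexity F U Q"
    unfolding bounded_inv_complexity_def
  proof (intro allI impI)
    fix \<epsilon> :: real assume e: "\<epsilon> > 0"
    have "\<forall>x\<in>Q. \<exists>\<delta>. \<delta> > 0 \<and> (\<exists>S. finite S \<and> S \<subseteq> ctrl_seqs U \<and>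
        (\<forall>y \<in> ball x \<delta> \<inter> Q. \<exists>\<omega>\<in>S. (\<lambda>k. phi F k y \<omega>) ` UNIV \<subseteq> nbhd \<epsilon> Q))"
      using H e unfolding fin_equi_inv_def fin_equi_inv_point_def by blast
    then obtain \<delta> SS where dS: "\<And>x. x \<in> Q \<Longrightarrow> \<delta> x > 0 \<and> finite (SS x) \<and> SS x \<subseteq> ctrl_seqs U \<and>
        (\<forall>y \<in> ball x (\<delta> x) \<inter> Q. \<exists>\<omega>\<in>SS x. (\<lambda>k. phi F k y \<omega>) ` UNIV \<subseteq> nbhd \<epsilon> Q)"
      by metis
    have "Q \<subseteq> (\<Union>x\<in>Q. ball x (\<delta> x))" using dS by force
    then obtain T where T: "T \<subseteq> Q" "finite T" "Q \<subseteq> (\<Union>x\<in>T. ball x (\<delta> x))"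
      using compactE_image[OF Q_compact, of Q "\<lambda>x. ball x (\<delta> x)"] by auto
    define S where "S = (\<Union>x\<in>T. SS x)"
    have finS: "finite S" using T dS unfolding S_def by (meson finite_UN_I subsetD)
    have sp: "spanning F U n \<epsilon> Q S" for n
      unfolding spanning_def
    proof (intro conjI)
      show "S \<subseteq> ctrl_seqs U" using T dS unfolding S_def by blast
      show "Q = (\<Union>\<omega>\<in>S. Qset F Q n \<epsilon> \<omega>)"
      proof
        show "(\<Union>\<omega>\<in>S. Qset F Q n \<epsilon> \<omega>) \<subseteq> Q" unfolding Qset_def by auto
        show "Q \<subseteq> (\<Union>\<omega>\<in>S. Qset F Q n \<epsilon> \<omega>)"
        proof
          fix y assume y: "y \<in> Q"
          then obtain x where x: "x \<in> T" "y \<in> ball x (\<delta> x)" using T by blast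
          then obtain \<omega> where w: "\<omega> \<in> SS x" "(\<lambda>k. phi F k y \<omega>) ` UNIV \<subseteq> nbhd \<epsilon> Q"
            using dS[of x] T y by blast
          have "\<omega> \<in> S" using w x unfolding S_def by blast
          moreover have "y \<in> Qset F Q n \<epsilon> \<omega>" using y w unfolding Qset_def by auto
          ultimately show "y \<in> (\<Union>\<omega>\<in>S. Qset F Q n \<epsilon> \<omega>)" by blast
        qed
      qed
    qed
    have le: "r_inv F U n \<epsilon> Q \<le> enat (card S)" for n
      unfolding r_inv_def using finS sp by (intro INF_lower) auto
    show "\<exists>C::real. C > 0 \<and> (\<forall>n\<ge>1. r_inv F U n \<epsilon> Q \<noteq> \<infinity> \<and> real (the_enat (r_inv F U n \<epsilon> Q)) \<le> C)"
    proof (intro exI[of _ "real (card S) + 1"] conjI allI impI)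
      fix n :: nat
      from le[of n] obtain r where r: "r_inv F U n \<epsilon> Q = enat r" "r \<le> card S"
        by (cases "r_inv F U n \<epsilon> Q") auto
      show "r_inv F U n \<epsilon> Q \<noteq> \<infinity>" using r by simp
      show "real (the_enat (r_inv F U n \<epsilon> Q)) \<le> real (card S) + 1" using r by simp
    qed simp
  qed
next
  assume B: "bounded_inv_complexity F U Q"
  define K where "K = ctrl_seqs U"
  have Kc: "compact K" unfolding K_def using U_compact by (rule compact_ctrl)
  show "fin_equi_inv F U Q"
    unfolding fin_equi_inv_def fin_equi_inv_point_def
  proof (intro ballI)
   fix x assume xQ: "x \<in> Q"
   show "x \<in> Q \<and> (\<forall>\<epsilon>>0. \<exists>\<delta>>0. \<exists>S. finite S \<and> S \<subseteq> ctrl_seqs U \<and>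
        (\<forall>y \<in> ball x \<delta> \<inter> Q. \<exists>\<omega>\<in>S. (\<lambda>k. phi F k y \<omega>) ` UNIV \<subseteq> nbhd \<epsilon> Q))"
   proof (intro conjI allI impI xQ)
    fix \<epsilon> :: real assume e: "\<epsilon> > 0"
    obtain C :: real where C: "C > 0" "\<And>n. n \<ge> 1 \<Longrightarrow> r_inv F U n (\<epsilon>/2) Q \<noteq> \<infinity> \<and>
         real (the_enat (r_inv F U n (\<epsilon>/2) Q)) \<le> C"
      using B e unfolding bounded_inv_complexity_def by (meson half_gt_zero)
    define N where "N = nat \<lfloor>C\<rfloor>"
    define dec where "dec i \<Omega> = (\<lambda>k. \<Omega> (prod_encode (i,k)))" for i :: nat and \<Omega> :: "nat \<Rightarrow> 'u"
    define A where "A n = {\<Omega>\<in>K. \<forall>y\<in>Q. \<exists>i<N. \<forall>k<n. infdist (phi F k y (dec i \<Omega>)) Q \<le> \<epsilon>/2}" for n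
    have decK: "\<Omega> \<in> K \<Longrightarrow> dec i \<Omega> \<in> K" for i \<Omega>
      unfolding K_def ctrl_seqs_def dec_def by auto
    have cdec: "continuous_on K (dec i)" for i
      unfolding dec_def
      by (intro continuous_on_coordinatewise_then_product continuous_on_subset[OF continuous_on_product_coordinates]) simp
    have cf: "continuous_on K (\<lambda>\<Omega>. infdist (phi F k y (dec i \<Omega>)) Q)" for k y i
    proof -
      have "continuous_on K (\<lambda>\<Omega>. (y, dec i \<Omega>))"
        by (intro continuous_intros cdec)
      moreover have "(\<lambda>\<Omega>. (y, dec i \<Omega>)) ` K \<subseteq> UNIV \<times> ctrl_seqs U"
        using decK unfolding K_def by auto
      ultimately have "continuous_on K ((\<lambda>(x, \<omega>). phi F k x \<omega>) \<circ> (\<lambda>\<Omega>. (y, dec i \<Omega>)))"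
        by (intro continuous_on_compose continuous_on_subset[OF phi_cont])
      then have "continuous_on K (\<lambda>\<Omega>. phi F k y (dec i \<Omega>))" by (simp add: o_def)
      then show ?thesis by (rule continuous_on_infdist)
    qed
    have clK: "closed K" using Kc by (rule compact_imp_closed)
    have closedA: "closed (A n)" for n
    proof -
      have "A n = K \<inter> (\<Inter>y\<in>Q. \<Union>i\<in>{..<N}. \<Inter>k\<in>{..<n}.
              (K \<inter> (\<lambda>\<Omega>. infdist (phi F k y (dec i \<Omega>)) Q) -` {..\<epsilon>/2}))"
        unfolding A_def by (auto; blast)
      also have "closed \<dots>"
        by (intro closed_Int clK closed_INT ballI closed_UN finite_lessThan
            continuous_closed_preimage cf closed_atMost)
      finally show ?thesis .
    qed
    have monoA: "m \<le> n \<Longrightarrow> A n \<subseteq> A m" for m n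
      unfolding A_def by (auto 4 4)
    have neA: "A n \<noteq> {}" for n
    proof -
      define Set where "Set = {S. finite S \<and> spanning F U (Suc n) (\<epsilon>/2) Q S}"
      have ri: "r_inv F U (Suc n) (\<epsilon>/2) Q = Inf ((\<lambda>S. enat (card S)) ` Set)"
        unfolding r_inv_def Set_def by simp
      have ninf: "r_inv F U (Suc n) (\<epsilon>/2) Q \<noteq> \<infinity>" and
        rle: "real (the_enat (r_inv F U (Suc n) (\<epsilon>/2) Q)) \<le> C" using C(2)[of "Suc n"] by auto
      have "Set \<noteq> {}" using ninf ri by (auto simp: Inf_enat_def)
      then have "\<exists>v. v \<in> (\<lambda>S. enat (card S)) ` Set" by blast
      then have "(LEAST v. v \<in> (\<lambda>S. enat (card S)) ` Set) \<in> (\<lambda>S. enat (card S)) ` Set"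
        by (rule LeastI_ex)
      moreover have "Inf ((\<lambda>S. enat (card S)) ` Set) = (LEAST v. v \<in> (\<lambda>S. enat (card S)) ` Set)"
        using \<open>Set \<noteq> {}\<close> by (simp add: Inf_enat_def)
      ultimately obtain S where S: "S \<in> Set" "r_inv F U (Suc n) (\<epsilon>/2) Q = enat (card S)"
        using ri by auto
      have cardN: "card S \<le> N" using rle S(2) unfolding N_def by simp linarith
      have finS: "finite S" and spS: "S \<subseteq> ctrl_seqs U" "Q = (\<Union>\<omega>\<in>S. Qset F Q (Suc n) (\<epsilon>/2) \<omega>)"
        using S(1) unfolding Set_def spanning_def by auto
      have Sne: "S \<noteq> {}" using spS(2) Q_ne by auto
      obtain h where h: "bij_betw h {0..<card S} S" using ex_bij_betw_nat_finite[OF finS] by blast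
      define g where "g i = h (min i (card S - 1))" for i
      have gS: "g i \<in> S" for i
      proof -
        have "card S > 0" using finS Sne by (simp add: card_gt_0_iff)
        then have "min i (card S - 1) \<in> {0..<card S}" by auto
        then show ?thesis using h unfolding g_def bij_betw_def by auto
      qed
      define \<Omega> where "\<Omega> m = g (fst (prod_decode m)) (snd (prod_decode m))" for m
      have decO: "dec i \<Omega> = g i" for i unfolding dec_def \<Omega>_def by simp
      have "\<Omega> \<in> K" using gS spS(1) unfolding K_def ctrl_seqs_def \<Omega>_def by blast
      moreover have "\<forall>y\<in>Q. \<exists>i<N. \<forall>k<n. infdist (phi F k y (dec i \<Omega>)) Q \<le> \<epsilon>/2"
      proof
        fix y assume y: "y \<in> Q"
        then obtain \<omega> where w: "\<omega> \<in> S" "y \<in> Qset F Q (Suc n) (\<epsilon>/2) \<omega>" using spS(2) by blast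
        then obtain j where j: "j < card S" "h j = \<omega>" using h unfolding bij_betw_def by (metis atLeastLessThan_iff imageE)
        have gj: "g j = \<omega>" using j unfolding g_def by simp
        show "\<exists>i<N. \<forall>k<n. infdist (phi F k y (dec i \<Omega>)) Q \<le> \<epsilon>/2"
        proof (intro exI[of _ j] conjI allI impI)
          show "j < N" using j cardN by simp
          fix k assume "k < n"
          then have "phi F k y \<omega> \<in> nbhd (\<epsilon>/2) Q" using w(2) unfolding Qset_def by auto
          then show "infdist (phi F k y (dec j \<Omega>)) Q \<le> \<epsilon>/2"
            using decO gj unfolding nbhd_def by simp
        qed
      qed
      ultimately have "\<Omega> \<in> A n" unfolding A_def by blast
      then show ?thesis by blast
    qed
    have "K \<inter> (\<Inter>n\<in>UNIV. A n) \<noteq> {}"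
    proof (rule compact_imp_fip_image[OF Kc])
      show "closed (A n)" for n by (rule closedA)
      fix I' :: "nat set" assume I': "finite I'" "I' \<subseteq> UNIV"
      show "K \<inter> (\<Inter>i\<in>I'. A i) \<noteq> {}"
      proof (cases "I' = {}")
        case True
        then show ?thesis using neA[of 0] unfolding A_def by auto
      next
        case False
        have "A (Max I') \<subseteq> K \<inter> (\<Inter>i\<in>I'. A i)"
        proof -
          have "A (Max I') \<subseteq> A i" if "i \<in> I'" for i
            using monoA[OF Max_ge[OF I'(1) that]] .
          moreover have "A (Max I') \<subseteq> K" unfolding A_def by auto
          ultimately show ?thesis by blast
        qed
        then show ?thesis using neA by blast
      qed
    qed
    then obtain \<Omega> where O: "\<Omega> \<in> K" "\<And>n. \<Omega> \<in> A n" by blast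
    show "\<exists>\<delta>>0. \<exists>S. finite S \<and> S \<subseteq> ctrl_seqs U \<and>
        (\<forall>y \<in> ball x \<delta> \<inter> Q. \<exists>\<omega>\<in>S. (\<lambda>k. phi F k y \<omega>) ` UNIV \<subseteq> nbhd \<epsilon> Q)"
    proof -
      have f1: "finite ((\<lambda>i. dec i \<Omega>) ` {..<N})" by simp
      have f2: "(\<lambda>i. dec i \<Omega>) ` {..<N} \<subseteq> ctrl_seqs U" using decK O(1) unfolding K_def by auto
      have f3: "\<forall>y \<in> ball x 1 \<inter> Q. \<exists>\<omega>\<in>(\<lambda>i. dec i \<Omega>) ` {..<N}. (\<lambda>k. phi F k y \<omega>) ` UNIV \<subseteq> nbhd \<epsilon> Q"
      proof
      fix y assume y: "y \<in> ball x 1 \<inter> Q"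
      have "\<forall>n. \<exists>i<N. \<forall>k<n. infdist (phi F k y (dec i \<Omega>)) Q \<le> \<epsilon>/2"
      proof
        fix n show "\<exists>i<N. \<forall>k<n. infdist (phi F k y (dec i \<Omega>)) Q \<le> \<epsilon>/2"
          using O(2)[of n] y unfolding A_def by auto
      qed
      then obtain i where i: "i < N" "\<And>k. infdist (phi F k y (dec i \<Omega>)) Q \<le> \<epsilon>/2"
        using pigeon_aux[where P="\<lambda>i k. infdist (phi F k y (dec i \<Omega>)) Q \<le> \<epsilon>/2"] by blast
      show "\<exists>\<omega>\<in>(\<lambda>i. dec i \<Omega>) ` {..<N}. (\<lambda>k. phi F k y \<omega>) ` UNIV \<subseteq> nbhd \<epsilon> Q"
      proof (intro bexI[of _ "dec i \<Omega>"])
        show "dec i \<Omega> \<in> (\<lambda>i. dec i \<Omega>) ` {..<N}" using i by auto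
        show "(\<lambda>k. phi F k y (dec i \<Omega>)) ` UNIV \<subseteq> nbhd \<epsilon> Q"
        proof -
          have "infdist (phi F k y (dec i \<Omega>)) Q < \<epsilon>" for k using i(2)[of k] e by linarith
          then show ?thesis unfolding nbhd_def by auto
        qed
      qed
      qed
      have "(0::real) < 1 \<and> (finite ((\<lambda>i. dec i \<Omega>) ` {..<N}) \<and> (\<lambda>i. dec i \<Omega>) ` {..<N} \<subseteq> ctrl_seqs U \<and>
        (\<forall>y \<in> ball x 1 \<inter> Q. \<exists>\<omega>\<in>(\<lambda>i. dec i \<Omega>) ` {..<N}. (\<lambda>k. phi F k y \<omega>) ` UNIV \<subseteq> nbhd \<epsilon> Q))"
        using f1 f2 f3 by (intro conjI zero_less_one)
      then show ?thesis by (intro exI[of _ "1::real"] conjI) (simp_all, rule exI[of _ "(\<lambda>i. dec i \<Omega>) ` {..<N}"], simp)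
    qed
   qed
  qed
qed

end
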